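(* Let $\theta_1$ be an irrational number, $\theta_0,\theta_2,\ldots,\theta_n$ real numbers, and $m\ge2$ an integer. Then the array $\big(\lfloor v_1\theta_1+v_2\theta_2+\cdots+v_n\theta_n+\theta_0\rfloor\big)_{\mathbf{v}\in\mathbb{N}^n}$ is uniformly distributed mod $m$.
   Context: An array $(S(\mathbf{v}))_{\mathbf{v}\in\mathbb{N}^n}$ of integers is uniformly distributed mod $m$ if for each $j\in\{0,\ldots,m-1\}$, $\#\{\mathbf{v}:1\le v_i\le V_i\ \forall i,\ S(\mathbf{v})\equiv j\pmod m\}/(V_1\cdots V_n)\to 1/m$ as $V_1,\ldots,V_n\to\infty$. *)

theory Defs
  imports "HOL-Analysis.Analysis"
begin

text \<open>Vectors v in N^n are represented as functions nat => nat, with the coordinates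
  v 1, ..., v n being the relevant ones; outside {1..n} they are fixed to 0.\<close>

definition box :: "nat \<Rightarrow> (nat \<Rightarrow> nat) \<Rightarrow> (nat \<Rightarrow> nat) set" where
  "box n V = {v. (\<forall>i\<in>{1..n}. 1 \<le> v i \<and> v i \<le> V i) \<and> (\<forall>i. i \<notin> {1..n} \<longrightarrow> v i = 0)}"

definition all_to_infinity :: "nat \<Rightarrow> (nat \<Rightarrow> nat) filter" where
  "all_to_infinity n = (INF N. principal {V. \<forall>i\<in>{1..n}. N \<le> V i})"

definition unif_distr_mod :: "nat \<Rightarrow> ((nat \<Rightarrow> nat) \<Rightarrow> int) \<Rightarrow> int \<Rightarrow> bool" where
  "unif_distr_mod n S m \<longleftrightarrow>
     (\<forall>j\<in>{0..<m}.
        ((\<lambda>V. real (card {v \<in> box n V. S v mod m = j}) / (\<Prod>i=1..n. real (V i)))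
          \<longlongrightarrow> 1 / real_of_int m) (all_to_infinity n))"

end

theory Submission
  imports Defs
begin

lemma tele_aux:
  fixes f :: "int \<Rightarrow> real"
  shows "(\<Sum>i<s. f (a - int i) - f (a - 1 - int i)) = f a - f (a - int s)"
  by (induction s) (auto simp: algebra_simps)

lemma tele:
  fixes f :: "int \<Rightarrow> real"
  shows "(\<Sum>k<L. f (int k) - f (int k - int s)) = (\<Sum>i<s. f (int L - 1 - int i) - f (-1 - int i))"
proof (induction L)
  case 0
  then show ?case by simp
next
  case (Suc L)
  have "(\<Sum>i<s. f (int (Suc L) - 1 - int i) - f (-1 - int i)) =
        (\<Sum>i<s. f (int L - 1 - int i) - f (-1 - int i)) + (\<Sum>i<s. f (int L - int i) - f (int L - 1 - int i))"
    by (simp add: sum.distrib[symmetric] algebra_simps)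
  also have "(\<Sum>i<s. f (int L - int i) - f (int L - 1 - int i)) = f (int L) - f (int L - int s)"
    using tele_aux[of f "int L" s] by simp
  finally show ?case using Suc by simp
qed

lemma floor_diff_bounds:
  fixes A x :: real
  shows "x - 1 < real_of_int (\<lfloor>A + x\<rfloor> - \<lfloor>A\<rfloor>)" "real_of_int (\<lfloor>A + x\<rfloor> - \<lfloor>A\<rfloor>) < x + 1"
  by linarith+

lemma lemmaA:
  fixes z c \<delta> :: real and L s :: nat
  assumes "\<delta> > 0" "real s * \<delta> \<le> c" "c \<le> (real s + 1) * \<delta>"
  shows "real s * (real L * \<delta> - 1) \<le> (\<Sum>k<L. real_of_int (\<lfloor>z + real k * \<delta>\<rfloor> - \<lfloor>z - c + real k * \<delta>\<rfloor>))"
    and "(\<Sum>k<L. real_of_int (\<lfloor>z + real k * \<delta>\<rfloor> - \<lfloor>z - c + real k * \<delta>\<rfloor>)) \<le> (real s + 1) * (real L * \<delta> + 1)"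
proof -
  define F where "F = (\<lambda>k::int. real_of_int \<lfloor>z + real_of_int k * \<delta>\<rfloor>)"
  have up: "\<lfloor>z - c + real k * \<delta>\<rfloor> \<le> \<lfloor>z + real_of_int (int k - int s) * \<delta>\<rfloor>" for k
  proof -
    have "z - c + real k * \<delta> \<le> z + real_of_int (int k - int s) * \<delta>"
      using assms by (simp add: algebra_simps)
    then show ?thesis by (rule floor_mono)
  qed
  have lo: "\<lfloor>z + real_of_int (int k - int (Suc s)) * \<delta>\<rfloor> \<le> \<lfloor>z - c + real k * \<delta>\<rfloor>" for k
  proof -
    have "z + real_of_int (int k - int (Suc s)) * \<delta> \<le> z - c + real k * \<delta>"
      using assms by (simp add: algebra_simps)
    then show ?thesis by (rule floor_mono)
  qed
  have bnd: "real L * \<delta> - 1 < F (int L - 1 - int i) - F (-1 - int i)"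
     "F (int L - 1 - int i) - F (-1 - int i) < real L * \<delta> + 1" for i :: nat
  proof -
    have e: "z + real_of_int (int L - 1 - int i) * \<delta> = (z + real_of_int (-1 - int i) * \<delta>) + real L * \<delta>"
      by (simp add: algebra_simps)
    show "real L * \<delta> - 1 < F (int L - 1 - int i) - F (-1 - int i)"
      "F (int L - 1 - int i) - F (-1 - int i) < real L * \<delta> + 1"
      unfolding F_def e using floor_diff_bounds[where A="z + real_of_int (-1 - int i) * \<delta>" and x="real L * \<delta>"]
      by simp_all
  qed
  have "(\<Sum>k<L. real_of_int (\<lfloor>z + real k * \<delta>\<rfloor> - \<lfloor>z - c + real k * \<delta>\<rfloor>)) \<ge> (\<Sum>k<L. F (int k) - F (int k - int s))"
    apply (rule sum_mono) using up unfolding F_def by (simp add: of_int_le_iff)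
  moreover have "(\<Sum>k<L. F (int k) - F (int k - int s)) = (\<Sum>i<s. F (int L - 1 - int i) - F (-1 - int i))"
    by (rule tele)
  moreover have "(\<Sum>i<s. F (int L - 1 - int i) - F (-1 - int i)) \<ge> (\<Sum>i<s. real L * \<delta> - 1)"
    by (rule sum_mono) (use bnd in \<open>simp add: less_imp_le\<close>)
  ultimately show "real s * (real L * \<delta> - 1) \<le> (\<Sum>k<L. real_of_int (\<lfloor>z + real k * \<delta>\<rfloor> - \<lfloor>z - c + real k * \<delta>\<rfloor>))"
    by simp
  have "(\<Sum>k<L. real_of_int (\<lfloor>z + real k * \<delta>\<rfloor> - \<lfloor>z - c + real k * \<delta>\<rfloor>)) \<le> (\<Sum>k<L. F (int k) - F (int k - int (Suc s)))"
    apply (rule sum_mono) using lo unfolding F_def by (simp add: of_int_le_iff)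
  moreover have "(\<Sum>k<L. F (int k) - F (int k - int (Suc s))) = (\<Sum>i<Suc s. F (int L - 1 - int i) - F (-1 - int i))"
    by (rule tele)
  moreover have "(\<Sum>i<Suc s. F (int L - 1 - int i) - F (-1 - int i)) \<le> (real s + 1) * (real L * \<delta> + 1)"
  proof -
    have "(\<Sum>i<Suc s. F (int L - 1 - int i) - F (-1 - int i)) \<le> (\<Sum>i<Suc s. real L * \<delta> + 1)"
      by (rule sum_mono) (use bnd in \<open>simp add: less_imp_le\<close>)
    also have "\<dots> = (real s + 1) * (real L * \<delta> + 1)" by simp
    finally show ?thesis .
  qed
  ultimately show "(\<Sum>k<L. real_of_int (\<lfloor>z + real k * \<delta>\<rfloor> - \<lfloor>z - c + real k * \<delta>\<rfloor>)) \<le> (real s + 1) * (real L * \<delta> + 1)"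
    by linarith
qed

lemma ind_mod:
  fixes X j m :: int
  assumes "0 \<le> j" "j < m"
  shows "(X - j) div m - (X - j - 1) div m = (if X mod m = j then 1 else 0)"
proof -
  have m: "m > 0" using assms by simp
  define t r where "t = X div m" and "r = X mod m"
  have X: "X = m * t + r" and r: "0 \<le> r" "r < m" using m by (simp_all add: t_def r_def)
  have e1: "X - j = (r - j) + t * m" and e2: "X - j - 1 = (r - j - 1) + t * m" using X by (simp_all add: algebra_simps)
  have a: "(X - j) div m = t + (r - j) div m"
    unfolding e1 using m by (rule div_mult_self1[OF less_imp_neq[symmetric]])
  have b: "(X - j - 1) div m = t + (r - j - 1) div m"
    unfolding e2 using m by (rule div_mult_self1[OF less_imp_neq[symmetric]])
  have c1: "(r - j) div m = (if r \<ge> j then 0 else -1)"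
    using r assms by (auto intro!: int_div_pos_eq[where q="-1" and r="r - j + m"] simp: not_le)
  have c2: "(r - j - 1) div m = (if r \<ge> j + 1 then 0 else -1)"
    using r assms by (auto intro!: int_div_pos_eq[where q="-1" and r="r - j - 1 + m"] simp: not_le)
  show ?thesis unfolding a b c1 c2 r_def[symmetric] by auto
qed



lemma sum_shift_ivl: "sum f {a..<a+b} = (\<Sum>r<b. f (a + r))" for a b :: nat
  by (induction b) simp_all

lemma card_as_sum:
  "real (card {a\<in>{1..N}. P a}) = (\<Sum>v<N. if P (Suc v) then 1 else 0)"
proof -
  have "real (card {a\<in>{1..N}. P a}) = (\<Sum>a\<in>{a\<in>{1..N}. P a}. 1)" by simp
  also have "\<dots> = (\<Sum>a\<in>{1..N}. if P a then 1 else 0)" by (rule sum.inter_filter) simp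
  also have "\<dots> = (\<Sum>a\<in>Suc ` {..<N}. if P a then 1 else 0)" by (simp add: image_Suc_lessThan)
  also have "\<dots> = (\<Sum>v<N. if P (Suc v) then 1 else 0)" by (subst sum.reindex) auto
  finally show ?thesis .
qed

lemma ind_eq:
  fixes m j :: int and x :: real
  assumes "0 \<le> j" "j < m"
  shows "real_of_int (\<lfloor>(x - of_int j) / of_int m\<rfloor> - \<lfloor>(x - of_int j - 1) / of_int m\<rfloor>)
         = (if \<lfloor>x\<rfloor> mod m = j then 1 else 0)"
proof -
  have m: "0 \<le> m" using assms by simp
  have "\<lfloor>(x - of_int j) / of_int m\<rfloor> = (\<lfloor>x\<rfloor> - j) div m"
    using floor_divide_real_eq_div[OF m, of "x - of_int j"] by simp
  moreover have "\<lfloor>(x - of_int j - 1) / of_int m\<rfloor> = (\<lfloor>x\<rfloor> - j - 1) div m"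
    using floor_divide_real_eq_div[OF m, of "x - of_int j - 1"]
    by (metis floor_diff_of_int of_int_1 of_int_diff)
  ultimately show ?thesis using ind_mod[OF assms, of "\<lfloor>x\<rfloor>"] by simp
qed

lemma core:
  fixes \<theta> d \<delta> :: real and m j p :: int and q s N :: nat
  assumes m: "0 \<le> j" "j < m" and q: "q > 0" and \<delta>: "\<delta> > 0"
    and qp: "real q * \<theta> = of_int m * (of_int p + \<delta>)"
    and s: "real s * \<delta> \<le> 1 / of_int m" "1 / of_int m \<le> (real s + 1) * \<delta>"
  defines "C \<equiv> real (card {a\<in>{1..N}. \<lfloor>real a * \<theta> + d\<rfloor> mod m = j})"
  shows "real q * (real s * (real (N div q) * \<delta> - 1)) \<le> C"
    and "C \<le> real q * ((real s + 1) * (real (N div q) * \<delta> + 1)) + real q"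
proof -
  define L where "L = N div q"
  have mpos: "(0::real) < of_int m" using m by simp
  define I where "I = (\<lambda>v::nat. real_of_int (\<lfloor>(real v * \<theta> + d - of_int j) / of_int m\<rfloor>
        - \<lfloor>(real v * \<theta> + d - of_int j - 1) / of_int m\<rfloor>))"
  have I: "I v = (if \<lfloor>real v * \<theta> + d\<rfloor> mod m = j then 1 else 0)" for v
    unfolding I_def using ind_eq[OF m, of "real v * \<theta> + d"] by simp
  have I01: "0 \<le> I v" "I v \<le> 1" for v unfolding I by auto
  have C: "C = (\<Sum>v<N. I (Suc v))" unfolding C_def card_as_sum I by simp
  have LN: "L * q \<le> N" unfolding L_def by (metis div_mult_mod_eq le_add1)
  have split: "(\<Sum>v<N. I (Suc v)) = (\<Sum>v<L*q. I (Suc v)) + (\<Sum>v\<in>{L*q..<N}. I (Suc v))"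
    using sum.atLeastLessThan_concat[of 0 "L*q" N "\<lambda>v. I (Suc v)", OF _ LN]
    by (simp add: lessThan_atLeast0)
  have rest1: "0 \<le> (\<Sum>v\<in>{L*q..<N}. I (Suc v))" by (rule sum_nonneg) (simp add: I01)
  have "(\<Sum>v\<in>{L*q..<N}. I (Suc v)) \<le> (\<Sum>v\<in>{L*q..<N}. 1)" by (rule sum_mono) (simp add: I01)
  also have "\<dots> = real (N - L*q)" by simp
  also have "\<dots> \<le> real q"
  proof -
    have "N - L*q = N mod q" unfolding L_def by (simp add: minus_div_mult_eq_mod)
    then show ?thesis using q by simp
  qed
  finally have rest2: "(\<Sum>v\<in>{L*q..<N}. I (Suc v)) \<le> real q" .
  have grp: "(\<Sum>v<L*q. I (Suc v)) = (\<Sum>r<q. \<Sum>k<L. I (Suc (k*q + r)))"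
  proof -
    have "(\<Sum>v<L*q. I (Suc v)) = (\<Sum>k<L. sum (\<lambda>v. I (Suc v)) {k*q..<k*q+q})"
      by (rule sum.nat_group[symmetric])
    also have "\<dots> = (\<Sum>k<L. \<Sum>r<q. I (Suc (k*q + r)))" by (simp add: sum_shift_ivl)
    also have "\<dots> = (\<Sum>r<q. \<Sum>k<L. I (Suc (k*q + r)))" by (rule sum.swap)
    finally show ?thesis .
  qed
  define z where "z = (\<lambda>r::nat. (real (Suc r) * \<theta> + d - of_int j) / of_int m)"
  have termeq: "I (Suc (k*q + r)) = real_of_int (\<lfloor>z r + real k * \<delta>\<rfloor> - \<lfloor>z r - 1 / of_int m + real k * \<delta>\<rfloor>)" for k r
  proof -
    have e0: "real (Suc (k*q+r)) * \<theta> = real (Suc r) * \<theta> + real k * (real q * \<theta>)"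
      by (simp add: algebra_simps)
    have e1: "(real (Suc (k*q + r)) * \<theta> + d - of_int j) / of_int m = (z r + real k * \<delta>) + of_int (int k * p)"
      unfolding z_def e0 qp using mpos by (simp add: field_simps)
    have e2: "(real (Suc (k*q + r)) * \<theta> + d - of_int j - 1) / of_int m = (z r - 1 / of_int m + real k * \<delta>) + of_int (int k * p)"
      unfolding z_def e0 qp using mpos by (simp add: field_simps)
    show ?thesis unfolding I_def e1 e2 floor_add_int[symmetric] by simp
  qed
  have inner: "real s * (real L * \<delta> - 1) \<le> (\<Sum>k<L. I (Suc (k*q + r)))"
    "(\<Sum>k<L. I (Suc (k*q + r))) \<le> (real s + 1) * (real L * \<delta> + 1)" for r
    unfolding termeq using lemmaA[OF \<delta> s, where L=L and z="z r"] by simp_all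
  have "(\<Sum>r<q. real s * (real L * \<delta> - 1)) \<le> (\<Sum>r<q. \<Sum>k<L. I (Suc (k*q + r)))"
    by (rule sum_mono) (rule inner)
  then have lo: "real q * (real s * (real L * \<delta> - 1)) \<le> (\<Sum>v<L*q. I (Suc v))" unfolding grp by simp
  have "(\<Sum>r<q. \<Sum>k<L. I (Suc (k*q + r))) \<le> (\<Sum>r<q. (real s + 1) * (real L * \<delta> + 1))"
    by (rule sum_mono) (rule inner)
  then have hi: "(\<Sum>v<L*q. I (Suc v)) \<le> real q * ((real s + 1) * (real L * \<delta> + 1))" unfolding grp by simp
  show "real q * (real s * (real (N div q) * \<delta> - 1)) \<le> C"
    using lo rest1 unfolding C split L_def by linarith
  show "C \<le> real q * ((real s + 1) * (real (N div q) * \<delta> + 1)) + real q"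
    using hi rest2 unfolding C split L_def by linarith
qed



lemma unif1:
  fixes \<theta> \<epsilon> :: real and m j :: int
  assumes irr: "\<theta> \<notin> \<rat>" and m: "0 \<le> j" "j < m" and \<epsilon>: "\<epsilon> > 0"
  obtains N0 where "\<And>N d. N \<ge> N0 \<Longrightarrow>
     \<bar>real (card {a\<in>{1..N}. \<lfloor>real a * \<theta> + d\<rfloor> mod m = j}) - real N / of_int m\<bar> \<le> \<epsilon> * real N"
proof -
  have mpos: "(0::real) < of_int m" using m by simp
  have m1: "1 / real_of_int m \<le> 1" using m by simp
  define \<beta> where "\<beta> = \<theta> / of_int m"
  have irrb: "\<beta> \<notin> \<rat>"
  proof
    assume "\<beta> \<in> \<rat>"
    then have "\<beta> * of_int m \<in> \<rat>" by (simp add: Rats_mult)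
    then show False using irr mpos unfolding \<beta>_def by simp
  qed
  obtain q :: nat where q: "q > 0" and fr: "\<bar>frac (real q * \<beta>) - \<epsilon>/4\<bar> < \<epsilon>/4"
  proof -
    have "0 \<le> \<epsilon>/4" "\<epsilon>/4 \<le> 1 \<or> \<epsilon>/4 > 1" using \<epsilon> by auto
    then show ?thesis
    proof (cases "\<epsilon>/4 \<le> 1")
      case True
      then show ?thesis using Kronecker_approx_1_explicit[OF irrb, of "\<epsilon>/4" "\<epsilon>/4"] \<epsilon> that by auto
    next
      case False
      obtain k where "k>0" "\<bar>frac (real k * \<beta>) - 1/2\<bar> < 1/2"
        using Kronecker_approx_1_explicit[OF irrb, of "1/2" "1/2"] by auto
      moreover have "frac (real k * \<beta>) \<noteq> 0"
      proof
        assume "frac (real k * \<beta>) = 0"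
        then have "real k * \<beta> \<in> \<int>" by (simp add: frac_eq_0_iff)
        then have "real k * \<beta> \<in> \<rat>" using Ints_subset_Rats by blast
        moreover have "inverse (real k) \<in> \<rat>" by (intro Rats_inverse) simp
        ultimately have "inverse (real k) * (real k * \<beta>) \<in> \<rat>" by (rule Rats_mult[rotated])
        moreover have "inverse (real k) * (real k * \<beta>) = \<beta>" using \<open>k>0\<close> by simp
        ultimately show False using irrb by simp
      qed
      ultimately show ?thesis using that False frac_ge_0[of "real k * \<beta>"] frac_lt_1[of "real k * \<beta>"]
        by (intro that[of k]) (auto simp: abs_if split: if_splits)
    qed
  qed
  define \<delta> where "\<delta> = frac (real q * \<beta>)"
  define p where "p = \<lfloor>real q * \<beta>\<rfloor>"
  have \<delta>: "0 < \<delta>" "\<delta> < \<epsilon>/2" using fr unfolding \<delta>_def by linarith+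
  have qp: "real q * \<theta> = of_int m * (of_int p + \<delta>)"
    unfolding \<delta>_def p_def frac_def \<beta>_def using mpos by (simp add: field_simps)
  define s where "s = nat \<lfloor>(1 / of_int m) / \<delta>\<rfloor>"
  have x0: "0 \<le> (1 / of_int m) / \<delta>" using mpos \<delta> by simp
  have sx: "real s \<le> (1 / of_int m) / \<delta>" "(1 / of_int m) / \<delta> < real s + 1"
    unfolding s_def using x0 by linarith+
  have xd: "((1 / of_int m) / \<delta>) * \<delta> = 1 / of_int m" using \<delta> by simp
  have s1: "real s * \<delta> \<le> 1 / of_int m"
    using mult_right_mono[OF sx(1), of \<delta>] \<delta> xd by simp
  have s2: "1 / of_int m \<le> (real s + 1) * \<delta>"
    using mult_right_mono[OF less_imp_le[OF sx(2)], of \<delta>] \<delta> xd by simp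
  define N0 where "N0 = nat \<lceil>2 * real q * (real s + 2) / \<epsilon>\<rceil>"
  show ?thesis
  proof (rule that)
    fix N :: nat and d :: real
    assume N: "N \<ge> N0"
    define C where "C = real (card {a\<in>{1..N}. \<lfloor>real a * \<theta> + d\<rfloor> mod m = j})"
    define L where "L = N div q"
    have lo: "real q * (real s * (real L * \<delta> - 1)) \<le> C"
      and hi: "C \<le> real q * ((real s + 1) * (real L * \<delta> + 1)) + real q"
      using core[OF m q \<delta>(1) qp s1 s2, of N d] unfolding C_def L_def by auto
    have dm: "N div q * q + N mod q = N" by (rule div_mult_mod_eq)
    have ml: "N mod q < q" using q by simp
    have "L * q \<le> N" "N < L * q + q" unfolding L_def using dm ml by linarith+
    then have LN: "real q * real L \<le> real N" "real N < real q * real L + real q"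
      by (simp_all add: mult.commute flip: of_nat_mult of_nat_add)
    have "2 * real q * (real s + 2) / \<epsilon> \<le> real N"
      using N unfolding N0_def by linarith
    then have big: "2 * (real q * (real s + 2)) \<le> \<epsilon> * real N"
      using \<epsilon> by (simp add: pos_divide_le_eq mult.commute mult.left_commute)
    have qL0: "0 \<le> real q * real L" by simp
    have h1: "real q * real L * (real s * \<delta>) \<ge> real q * real L * (1 / of_int m - \<delta>)"
      using s2 qL0 by (intro mult_left_mono) (auto simp: algebra_simps)
    have h2: "real q * real L * ((real s + 1) * \<delta>) \<le> real q * real L * (1 / of_int m + \<delta>)"
      using s1 qL0 by (intro mult_left_mono) (auto simp: algebra_simps)
    have h3: "real q * real L * \<delta> \<le> real N * \<delta>" using LN \<delta> by (intro mult_right_mono) auto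
    have h4: "real N * \<delta> \<le> real N * (\<epsilon>/2)" using \<delta> by (intro mult_left_mono) auto
    have h5: "real q * real L * (1 / of_int m) \<le> real N * (1 / of_int m)"
      using LN mpos by (intro mult_right_mono) auto
    have h6: "real N * (1 / of_int m) \<le> real q * real L * (1 / of_int m) + real q"
    proof -
      have "real N * (1 / of_int m) \<le> (real q * real L + real q) * (1 / of_int m)"
        using LN mpos by (intro mult_right_mono) auto
      also have "\<dots> \<le> real q * real L * (1 / of_int m) + real q"
        using mult_left_mono[OF m1, of "real q"] by (simp add: algebra_simps)
      finally show ?thesis .
    qed
    have e1: "real q * (real s * (real L * \<delta> - 1)) = real q * real L * (real s * \<delta>) - real q * real s"
      by (simp add: algebra_simps)
    have e2: "real q * ((real s + 1) * (real L * \<delta> + 1)) + real q =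
       real q * real L * ((real s + 1) * \<delta>) + real q * (real s + 2)"
      by (simp add: algebra_simps)
    have e3: "real q * real L * (1 / of_int m - \<delta>) = real q * real L * (1 / of_int m) - real q * real L * \<delta>"
      "real q * real L * (1 / of_int m + \<delta>) = real q * real L * (1 / of_int m) + real q * real L * \<delta>"
      by (simp_all add: algebra_simps)
    have e4: "real N / of_int m = real N * (1 / of_int m)" by simp
    have e5: "\<epsilon> * real N = real N * (\<epsilon>/2) + real N * (\<epsilon>/2)" by (simp add: algebra_simps)
    have "real q * (real s + 2) = real q * real s + 2 * real q" "0 \<le> real q * real s" by (simp_all add: algebra_simps)
    then show "\<bar>C - real N / of_int m\<bar> \<le> \<epsilon> * real N"
      unfolding abs_le_iff using e4 e5 lo hi e1 e2 e3 h1 h2 h3 h4 h5 h6 big by (smt (verit))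
  qed
qed



lemma box_image:
  "box n V = (\<lambda>f i. if i \<in> {1..n} then f i else 0) ` (PiE {1..n} (\<lambda>i. {1..V i}))"
proof
  show "box n V \<subseteq> (\<lambda>f i. if i \<in> {1..n} then f i else 0) ` (PiE {1..n} (\<lambda>i. {1..V i}))"
  proof
    fix v assume v: "v \<in> box n V"
    have "v = (\<lambda>i. if i \<in> {1..n} then restrict v {1..n} i else 0)"
      using v unfolding box_def by (auto simp: fun_eq_iff)
    moreover have "restrict v {1..n} \<in> PiE {1..n} (\<lambda>i. {1..V i})"
      using v unfolding box_def by auto
    ultimately show "v \<in> (\<lambda>f i. if i \<in> {1..n} then f i else 0) ` (PiE {1..n} (\<lambda>i. {1..V i}))"
      by blast
  qed
  show "(\<lambda>f i. if i \<in> {1..n} then f i else 0) ` (PiE {1..n} (\<lambda>i. {1..V i})) \<subseteq> box n V"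
    unfolding box_def by (auto simp: PiE_iff)
qed

lemma box_card: "finite (box n V)" "card (box n V) = (\<Prod>i=1..n. V i)"
proof -
  have inj: "inj_on (\<lambda>f i. if i \<in> {1..n} then f i else 0) (PiE {1..n} (\<lambda>i. {1..V i}))"
  proof (rule inj_onI)
    fix f g assume f: "f \<in> PiE {1..n} (\<lambda>i. {1..V i})" and g: "g \<in> PiE {1..n} (\<lambda>i. {1..V i})"
      and eq: "(\<lambda>i. if i \<in> {1..n} then f i else 0) = (\<lambda>i. if i \<in> {1..n} then g i else 0)"
    show "f = g"
    proof (rule PiE_ext[OF f g])
      fix i assume "i \<in> {1..n}"
      then show "f i = g i" using fun_cong[OF eq, of i] by simp
    qed
  qed
  show "finite (box n V)" unfolding box_image by (intro finite_imageI finite_PiE) auto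
  show "card (box n V) = (\<Prod>i=1..n. V i)"
    unfolding box_image card_image[OF inj] by (subst card_PiE) auto
qed

lemma box_fib:
  assumes n: "n \<ge> 1"
  shows "card {v\<in>box n V. Q v} = (\<Sum>u\<in>(\<lambda>v. v(1:=0)) ` box n V. card {a\<in>{1..V 1}. Q (u(1:=a))})"
proof -
  define g where "g = (\<lambda>v::nat\<Rightarrow>nat. v(1:=0))"
  have fin: "finite (box n V)" by (rule box_card)
  have "card {v\<in>box n V. Q v} = (\<Sum>v\<in>{v\<in>box n V. Q v}. 1)" by simp
  also have "\<dots> = (\<Sum>u\<in>g ` box n V. \<Sum>v\<in>{x\<in>{v\<in>box n V. Q v}. g x = u}. 1)"
    by (rule sum.group[symmetric]) (use fin in auto)
  also have "\<dots> = (\<Sum>u\<in>g ` box n V. card {a\<in>{1..V 1}. Q (u(1:=a))})"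
  proof (rule sum.cong[OF refl])
    fix u assume "u \<in> g ` box n V"
    then obtain v0 where v0: "v0 \<in> box n V" "u = v0(1:=0)" unfolding g_def by auto
    have 1: "(1::nat) \<in> {1..n}" using n by simp
    have eqs: "{x\<in>{v\<in>box n V. Q v}. g x = u} = (\<lambda>a. u(1:=a)) ` {a\<in>{1..V 1}. Q (u(1:=a))}"
    proof
      show "{x\<in>{v\<in>box n V. Q v}. g x = u} \<subseteq> (\<lambda>a. u(1:=a)) ` {a\<in>{1..V 1}. Q (u(1:=a))}"
      proof
        fix x assume x: "x \<in> {x\<in>{v\<in>box n V. Q v}. g x = u}"
        then have "g x = u" by simp
        then have xu: "x = u(1:= x 1)" unfolding g_def by auto
        have "x 1 \<in> {1..V 1}" using x 1 unfolding box_def by auto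
        then show "x \<in> (\<lambda>a. u(1:=a)) ` {a\<in>{1..V 1}. Q (u(1:=a))}"
          using x xu by (intro image_eqI[of _ _ "x 1"]) auto
      qed
      show "(\<lambda>a. u(1:=a)) ` {a\<in>{1..V 1}. Q (u(1:=a))} \<subseteq> {x\<in>{v\<in>box n V. Q v}. g x = u}"
      proof
        fix x assume "x \<in> (\<lambda>a. u(1:=a)) ` {a\<in>{1..V 1}. Q (u(1:=a))}"
        then obtain a where a: "a \<in> {1..V 1}" "Q (u(1:=a))" "x = u(1:=a)" by auto
        have "x \<in> box n V" using v0 a 1 unfolding box_def by auto
        moreover have "g x = u" using a v0 unfolding g_def by auto
        ultimately show "x \<in> {x\<in>{v\<in>box n V. Q v}. g x = u}" using a by auto
      qed
    qed
    have inj: "inj_on (\<lambda>a. u(1:=a)) {a\<in>{1..V 1}. Q (u(1:=a))}"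
      by (rule inj_onI) (metis fun_upd_same)
    show "(\<Sum>v\<in>{x\<in>{v\<in>box n V. Q v}. g x = u}. 1) = card {a\<in>{1..V 1}. Q (u(1:=a))}"
      unfolding eqs using card_image[OF inj] by simp
  qed
  finally show ?thesis unfolding g_def .
qed

lemma sum_upd:
  fixes \<theta> :: "nat \<Rightarrow> real"
  assumes n: "n \<ge> 1"
  shows "(\<Sum>i=1..n. real ((u(1:=a)) i) * \<theta> i) = real a * \<theta> 1 + (\<Sum>i\<in>{1..n}-{1}. real (u i) * \<theta> i)"
proof -
  have 1: "(1::nat) \<in> {1..n}" using n by simp
  have rem: "(\<Sum>i=1..n. F i) = F 1 + (\<Sum>i\<in>{1..n}-{1}. F i)" for F :: "nat \<Rightarrow> real"
    by (rule sum.remove[OF _ 1]) simp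
  have "(\<Sum>i=1..n. real ((u(1:=a)) i) * \<theta> i) = real ((u(1:=a)) 1) * \<theta> 1 + (\<Sum>i\<in>{1..n}-{1}. real ((u(1:=a)) i) * \<theta> i)"
    by (rule rem)
  also have "(\<Sum>i\<in>{1..n}-{1}. real ((u(1:=a)) i) * \<theta> i) = (\<Sum>i\<in>{1..n}-{1}. real (u i) * \<theta> i)"
    by (rule sum.cong) auto
  finally show ?thesis by simp
qed

theorem proposition6p4:
  fixes n :: nat and \<theta> :: "nat \<Rightarrow> real" and m :: int
  assumes "n \<ge> 1"
    and "\<theta> 1 \<notin> \<rat>"
    and "m \<ge> 2"
  shows "unif_distr_mod n (\<lambda>v. \<lfloor>(\<Sum>i=1..n. real (v i) * \<theta> i) + \<theta> 0\<rfloor>) m"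
  unfolding unif_distr_mod_def
proof (intro ballI)
  fix j assume j: "j \<in> {0..<m}"
  then have jm: "0 \<le> j" "j < m" by auto
  have mpos: "(0::real) < of_int m" using assms by simp
  define S where "S = (\<lambda>v::nat\<Rightarrow>nat. \<lfloor>(\<Sum>i=1..n. real (v i) * \<theta> i) + \<theta> 0\<rfloor>)"
  show "((\<lambda>V. real (card {v \<in> box n V. \<lfloor>(\<Sum>i=1..n. real (v i) * \<theta> i) + \<theta> 0\<rfloor> mod m = j}) /
          (\<Prod>i=1..n. real (V i))) \<longlongrightarrow> 1 / real_of_int m) (all_to_infinity n)"
    unfolding tendsto_iff
  proof (intro allI impI)
    fix e :: real assume e: "e > 0"
    obtain N0 where N0: "\<And>N d. N \<ge> N0 \<Longrightarrow>
     \<bar>real (card {a\<in>{1..N}. \<lfloor>real a * \<theta> 1 + d\<rfloor> mod m = j}) - real N / of_int m\<bar> \<le> (e/2) * real N"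
      using unif1[OF assms(2) jm, of "e/2"] e by auto
    define K where "K = max N0 1"
    have ev: "eventually (\<lambda>V. \<forall>i\<in>{1..n}. K \<le> V i) (all_to_infinity n)"
      unfolding all_to_infinity_def
      by (rule eventually_INF1[of K]) (auto simp: eventually_principal)
    show "eventually (\<lambda>V. dist (real (card {v \<in> box n V. \<lfloor>(\<Sum>i=1..n. real (v i) * \<theta> i) + \<theta> 0\<rfloor> mod m = j}) /
          (\<Prod>i=1..n. real (V i))) (1 / real_of_int m) < e) (all_to_infinity n)"
    proof (rule eventually_mono[OF ev])
      fix V :: "nat \<Rightarrow> nat" assume V: "\<forall>i\<in>{1..n}. K \<le> V i"
      define B where "B = (\<lambda>v. v(1:=0)) ` box n V"
      define d where "d = (\<lambda>u. (\<Sum>i\<in>{1..n}-{1}. real (u i) * \<theta> i) + \<theta> 0)"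
      define c where "c = (\<lambda>u. real (card {a\<in>{1..V 1}. \<lfloor>real a * \<theta> 1 + d u\<rfloor> mod m = j}))"
      have V1: "V 1 \<ge> N0" "V 1 \<ge> 1" using V assms(1) unfolding K_def by auto
      have cnt: "real (card {v \<in> box n V. \<lfloor>(\<Sum>i=1..n. real (v i) * \<theta> i) + \<theta> 0\<rfloor> mod m = j}) = (\<Sum>u\<in>B. c u)"
        unfolding box_fib[OF assms(1)] B_def c_def d_def of_nat_sum
        by (rule sum.cong[OF refl]) (simp only: sum_upd[OF assms(1)] add.assoc)
      have cv: "card {a\<in>{1..V 1}. True} = V 1"
      proof -
        have "{a\<in>{1..V 1}. True} = {1..V 1}" by blast
        then show ?thesis by (simp only: card_atLeastAtMost)
      qed
      have tot: "real (card (box n V)) = (\<Sum>u\<in>B. real (V 1))"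
        using box_fib[OF assms(1), of V "\<lambda>_. True"] unfolding B_def cv by simp
      have prod: "(\<Prod>i=1..n. real (V i)) = real (card B) * real (V 1)"
        using tot box_card(2)[of n V] by (simp add: of_nat_prod)
      have ppos: "(\<Prod>i=1..n. real (V i)) > 0"
        using V unfolding K_def by (intro prod_pos) fastforce
      have "\<bar>(\<Sum>u\<in>B. c u) - (\<Sum>u\<in>B. real (V 1) / of_int m)\<bar> \<le> (\<Sum>u\<in>B. \<bar>c u - real (V 1) / of_int m\<bar>)"
        by (subst sum_subtractf[symmetric]) (rule sum_abs)
      also have "\<dots> \<le> (\<Sum>u\<in>B. (e/2) * real (V 1))"
        unfolding c_def by (rule sum_mono) (rule N0[OF V1(1)])
      finally have bnd: "\<bar>(\<Sum>u\<in>B. c u) - real (card B) * real (V 1) / of_int m\<bar> \<le> (e/2) * (real (card B) * real (V 1))"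
        by (simp add: algebra_simps)
      define P where "P = real (card B) * real (V 1)"
      have Ppos: "P > 0" using ppos prod unfolding P_def by simp
      have "dist ((\<Sum>u\<in>B. c u) / P) (1 / of_int m) = \<bar>(\<Sum>u\<in>B. c u) - P / of_int m\<bar> / P"
        using Ppos mpos by (simp add: dist_real_def field_simps)
      also have "\<dots> \<le> (e/2) * P / P"
        using bnd Ppos unfolding P_def by (intro divide_right_mono) (auto simp: algebra_simps)
      also have "\<dots> < e" using Ppos e by simp
      finally show "dist (real (card {v \<in> box n V. \<lfloor>(\<Sum>i=1..n. real (v i) * \<theta> i) + \<theta> 0\<rfloor> mod m = j}) /
          (\<Prod>i=1..n. real (V i))) (1 / real_of_int m) < e"
        unfolding cnt prod P_def .
    qed
  qed
qed


end
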